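(* Let $r\in\mathbb{F}_2((x^{-1}))$, $k\in\mathbb{N}$, and $f\in\mathbb{F}_2[x]$ with $f(1)=1$. Then $p(r)_i=p(r+(1+x)^kf)_i$ for all $0\le i<k$, and $p(r)_k\ne p(r+(1+x)^kf)_k$.
   Context: $\mathbb{F}_2((x^{-1}))$ is the field of formal series $\sum_{z\in\mathbb{Z}}a_zx^z$, $a_z\in\mathbb{F}_2$, with $a_z\ne0$ for only finitely many positive $z$. The polynomial part is $[\sum a_zx^z]=\sum_{z\ge0}a_zx^z$. $S(r)=\frac{r}{x+1}$ if $[r](1)=0$ and $S(r)=\frac{xr}{x+1}$ if $[r](1)=1$. The parity sequence is $p(r)_k=[S^k(r)](1)\in\mathbb{F}_2$ for $k\in\mathbb{N}$. *)

theory Defs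
  imports "HOL-Library.Z2" "HOL-Computational_Algebra.Polynomial"
begin

text \<open>Elements of F_2((x^-1)) are represented by their coefficient functions
  int => bit (coefficient of x^z), subject to the side condition that only
  finitely many coefficients with positive index are nonzero.\<close>

type_synonym laur = "int \<Rightarrow> bit"

definition laurent :: "laur \<Rightarrow> bool" where
  "laurent r \<longleftrightarrow> finite {z. 0 < z \<and> r z \<noteq> 0}"

definition ladd :: "laur \<Rightarrow> laur \<Rightarrow> laur" where
  "ladd r s = (\<lambda>z. r z + s z)"

definition of_poly :: "bit poly \<Rightarrow> laur" where
  "of_poly p = (\<lambda>z. if 0 \<le> z then coeff p (nat z) else 0)"

definition lmulx :: "laur \<Rightarrow> laur" where
  "lmulx r = (\<lambda>z. r (z - 1))"

text \<open>Division by x+1: since 1/(x+1) = sum_{j>=1} x^-j, the coefficient of x^z of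
  r/(x+1) is the (finite) sum of the coefficients of r at indices m > z.\<close>
definition ldivx1 :: "laur \<Rightarrow> laur" where
  "ldivx1 r = (\<lambda>z. sum r {m. z < m \<and> r m \<noteq> 0})"

text \<open>[r](1): the polynomial part of r evaluated at 1.\<close>
definition polypart_at1 :: "laur \<Rightarrow> bit" where
  "polypart_at1 r = sum r {z. 0 \<le> z \<and> r z \<noteq> 0}"

definition S :: "laur \<Rightarrow> laur" where
  "S r = (if polypart_at1 r = 0 then ldivx1 r else ldivx1 (lmulx r))"

definition parity :: "laur \<Rightarrow> nat \<Rightarrow> bit" where
  "parity r k = polypart_at1 ((S ^^ k) r)"

end

theory Submission
  imports Defs
begin

definition bnd :: "laur \<Rightarrow> int \<Rightarrow> bool" where
  "bnd r N \<longleftrightarrow> (\<forall>z>N. r z = 0)"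

lemma laurent_bnd: "laurent r \<Longrightarrow> \<exists>N\<ge>0. bnd r N"
proof -
  assume "laurent r"
  then have fin: "finite {z. 0 < z \<and> r z \<noteq> 0}" by (simp add: laurent_def)
  define N where "N = Max (insert 0 {z. 0 < z \<and> r z \<noteq> 0})"
  have "N \<ge> 0" using fin by (simp add: N_def)
  moreover have "bnd r N"
    unfolding bnd_def
  proof (intro allI impI)
    fix z assume "z > N"
    show "r z = 0"
    proof (rule ccontr)
      assume "r z \<noteq> 0"
      with \<open>z > N\<close> \<open>N \<ge> 0\<close> have "z \<in> insert 0 {z. 0 < z \<and> r z \<noteq> 0}" by auto
      then have "z \<le> N" using fin unfolding N_def by (intro Max_ge) auto
      with \<open>z > N\<close> show False by simp
    qed
  qed
  ultimately show ?thesis by blast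
qed

lemma bnd_laurent: "bnd r N \<Longrightarrow> laurent r"
proof -
  assume "bnd r N"
  then have "{z. 0 < z \<and> r z \<noteq> 0} \<subseteq> {0<..N}" unfolding bnd_def
    by (auto simp: not_less[symmetric])
  then show ?thesis unfolding laurent_def by (rule finite_subset) simp
qed

lemma bnd_mono: "bnd r N \<Longrightarrow> N \<le> M \<Longrightarrow> bnd r M"
  unfolding bnd_def by auto

lemma ldivx1_int: "bnd r N \<Longrightarrow> ldivx1 r z = sum r {z<..N}"
  unfolding ldivx1_def
  by (rule sum.mono_neutral_left) (auto simp: bnd_def not_less[symmetric])

lemma pp_int: "bnd r N \<Longrightarrow> polypart_at1 r = sum r {0..N}"
  unfolding polypart_at1_def
  by (rule sum.mono_neutral_left) (auto simp: bnd_def not_less[symmetric])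

lemma ldivx1_rec: "bnd r N \<Longrightarrow> ldivx1 r (z - 1) = r z + ldivx1 r z"
proof -
  assume b: "bnd r N"
  then have b': "bnd r (max N z)" by (rule bnd_mono) simp
  have "{z-1<..max N z} = insert z {z<..max N z}" by auto
  then show ?thesis using ldivx1_int[OF b'] by simp
qed

lemma ldivx1_bnd: "bnd r N \<Longrightarrow> bnd (ldivx1 r) N"
  using ldivx1_int unfolding bnd_def by fastforce

lemma bit_self [simp]: "(a::bit) + a = 0" by (cases a) simp_all

lemma bit_self2 [simp]: "(a::bit) + (a + b) = b" by (cases a; cases b) simp_all

lemma uniq:
  fixes t u r :: laur and N :: int
  assumes "\<And>z. t (z - 1) = r z + t z" "\<And>z. u (z - 1) = r z + u z"
    "\<And>z. z \<ge> N \<Longrightarrow> t z = u z"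
  shows "t = u"
proof
  fix z
  have "\<And>n. t (N - int n) = u (N - int n)"
  proof -
    fix n show "t (N - int n) = u (N - int n)"
    proof (induction n)
      case 0 then show ?case using assms(3) by simp
    next
      case (Suc n)
      have "t (N - int n - 1) = u (N - int n - 1)"
        using assms(1)[of "N - int n"] assms(2)[of "N - int n"] Suc by simp
      then show ?case by (simp add: algebra_simps)
    qed
  qed
  show "t z = u z"
  proof (cases "z \<ge> N")
    case True then show ?thesis using assms(3) by simp
  next
    case False
    then have "z = N - int (nat (N - z))" by simp
    then show ?thesis using \<open>\<And>n. t (N - int n) = u (N - int n)\<close> by metis
  qed
qed

lemma of_poly_bnd: "bnd (of_poly p) (int (degree p))"
  unfolding bnd_def of_poly_def by (auto intro: coeff_eq_0)

lemma of_poly_mult1: "of_poly ([:1,1:] * p) z = of_poly p z + of_poly p (z - 1)"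
proof (cases "z \<ge> 1")
  case True
  define n where "n = nat (z - 1)"
  have n: "nat z = Suc n" "nat (z - 1) = n" using True by (auto simp: n_def)
  then show ?thesis using True unfolding of_poly_def by (simp add: coeff_pCons algebra_simps)
next
  case False
  then show ?thesis unfolding of_poly_def
    by (cases "z = 0") (auto simp: coeff_pCons)
qed

lemma ldivx1_of_poly: "ldivx1 (of_poly ([:1,1:] * p)) = of_poly p"
proof (rule uniq[where r = "of_poly ([:1,1:] * p)" and N = "int (degree ([:1,1:] * p)) + int (degree p) + 1"])
  show "\<And>z. ldivx1 (of_poly ([:1,1:] * p)) (z - 1) = of_poly ([:1,1:] * p) z + ldivx1 (of_poly ([:1,1:] * p)) z"
    using ldivx1_rec[OF of_poly_bnd] by blast
  show "\<And>z. of_poly p (z - 1) = of_poly ([:1,1:] * p) z + of_poly p z"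
    unfolding of_poly_mult1 by (metis bit_self2 add.commute)
  fix z assume z: "int (degree ([:1,1:] * p)) + int (degree p) + 1 \<le> z"
  have "ldivx1 (of_poly ([:1,1:] * p)) z = 0"
    using ldivx1_int[OF of_poly_bnd, of "[:1,1:] * p" z] z by simp
  moreover have "of_poly p z = 0"
    using of_poly_bnd[of p] z by (simp add: bnd_def)
  ultimately show "ldivx1 (of_poly ([:1,1:] * p)) z = of_poly p z" by simp
qed

lemma ladd_bnd: "bnd r N \<Longrightarrow> bnd s M \<Longrightarrow> bnd (ladd r s) (max N M)"
  unfolding bnd_def ladd_def by auto

lemma ldivx1_ladd: "bnd r N \<Longrightarrow> bnd s M \<Longrightarrow> ldivx1 (ladd r s) = ladd (ldivx1 r) (ldivx1 s)"
proof
  fix z assume r: "bnd r N" and s: "bnd s M"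
  have r': "bnd r (max N M)" by (rule bnd_mono[OF r]) simp
  have s': "bnd s (max N M)" by (rule bnd_mono[OF s]) simp
  have "ldivx1 (ladd r s) z = sum (ladd r s) {z<..max N M}"
    by (rule ldivx1_int[OF ladd_bnd[OF r s]])
  also have "\<dots> = sum r {z<..max N M} + sum s {z<..max N M}"
    unfolding ladd_def by (rule sum.distrib)
  also have "\<dots> = ladd (ldivx1 r) (ldivx1 s) z"
    unfolding ladd_def using ldivx1_int[OF r'] ldivx1_int[OF s'] by (simp only:)
  finally show "ldivx1 (ladd r s) z = ladd (ldivx1 r) (ldivx1 s) z" .
qed

lemma lmulx_bnd: "bnd r N \<Longrightarrow> bnd (lmulx r) (N + 1)"
  unfolding bnd_def lmulx_def by auto

lemma lmulx_ladd: "lmulx (ladd r s) = ladd (lmulx r) (lmulx s)"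
  unfolding lmulx_def ladd_def by simp

lemma lmulx_of_poly: "lmulx (of_poly p) = of_poly ([:0,1:] * p)"
proof
  fix z
  show "lmulx (of_poly p) z = of_poly ([:0,1:] * p) z"
  proof (cases "z \<ge> 1")
    case True
    define n where "n = nat (z - 1)"
    have n: "nat z = Suc n" "nat (z - 1) = n" using True by (auto simp: n_def)
    then show ?thesis using True unfolding of_poly_def lmulx_def by (simp add: coeff_pCons)
  next
    case False
    then show ?thesis unfolding of_poly_def lmulx_def
      by (cases "z = 0") (auto simp: coeff_pCons)
  qed
qed

lemma sum_of_poly: "M \<ge> int (degree h) \<Longrightarrow> sum (of_poly h) {0..M} = poly h 1"
proof -
  assume M: "M \<ge> int (degree h)"
  have "{0..M} = int ` {..nat M}" using M
    by (auto simp: image_iff intro!: bexI[where x = "nat _"])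
  then have "sum (of_poly h) {0..M} = sum (of_poly h \<circ> int) {..nat M}"
    by (simp add: sum.reindex)
  also have "\<dots> = sum (coeff h) {..nat M}"
    by (rule sum.cong) (auto simp: of_poly_def)
  also have "\<dots> = sum (coeff h) {..degree h}"
    using M by (intro sum.mono_neutral_right) (auto intro: coeff_eq_0)
  also have "\<dots> = poly h 1" by (simp only: poly_altdef power_one mult_1_right)
  finally show ?thesis .
qed

lemma pp_ladd: "bnd r N \<Longrightarrow> polypart_at1 (ladd r (of_poly h)) = polypart_at1 r + poly h 1"
proof -
  assume r: "bnd r N"
  define M where "M = max N (int (degree h))"
  have r': "bnd r M" by (rule bnd_mono[OF r]) (simp add: M_def)
  have h': "bnd (of_poly h) M" by (rule bnd_mono[OF of_poly_bnd]) (simp add: M_def)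
  have "polypart_at1 (ladd r (of_poly h)) = sum (ladd r (of_poly h)) {0..M}"
    using pp_int[OF ladd_bnd[OF r' h']] by simp
  also have "\<dots> = sum r {0..M} + sum (of_poly h) {0..M}"
    unfolding ladd_def by (rule sum.distrib)
  also have "\<dots> = polypart_at1 r + poly h 1"
    using pp_int[OF r'] sum_of_poly[of h M] by (simp only: M_def max.cobounded2 simp_thms)
  finally show ?thesis .
qed

lemma S_bnd: "bnd r N \<Longrightarrow> bnd (S r) (N + 1)"
proof -
  assume r: "bnd r N"
  have a: "bnd (ldivx1 r) (N + 1)" by (rule ldivx1_bnd[OF bnd_mono[OF r]]) simp
  have b: "bnd (ldivx1 (lmulx r)) (N + 1)" by (rule ldivx1_bnd[OF lmulx_bnd[OF r]])
  show ?thesis unfolding S_def using a b by simp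
qed

lemma S_shift:
  assumes r: "bnd r N"
  shows "S (ladd r (of_poly ([:1,1:]^Suc k * f))) =
     ladd (S r) (of_poly ([:1,1:]^k * (if polypart_at1 r = 0 then f else [:0,1:] * f)))"
proof -
  have pp: "polypart_at1 (ladd r (of_poly ([:1,1:]^Suc k * f))) = polypart_at1 r"
    using pp_ladd[OF r] by simp
  show ?thesis
  proof (cases "polypart_at1 r = 0")
    case True
    have "[:1,1:]^Suc k * f = [:1,1:] * ([:1,1:]^k * f)" by (simp only: power_Suc mult.assoc)
    then have e: "of_poly ([:1,1:]^Suc k * f) = of_poly ([:1,1:] * ([:1,1:]^k * f))" by simp
    have "S (ladd r (of_poly ([:1,1:]^Suc k * f))) = ldivx1 (ladd r (of_poly ([:1,1:]^Suc k * f)))"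
      unfolding S_def by (simp only: pp True simp_thms if_True)
    also have "\<dots> = ladd (ldivx1 r) (ldivx1 (of_poly ([:1,1:]^Suc k * f)))"
      by (rule ldivx1_ladd[OF r of_poly_bnd])
    also have "\<dots> = ladd (S r) (of_poly ([:1,1:]^k * f))"
      unfolding e ldivx1_of_poly S_def by (simp only: True simp_thms if_True)
    finally show ?thesis using True by simp
  next
    case False
    have e: "[:0,1:] * ([:1,1:]^Suc k * f) = [:1,1:] * ([:1,1:]^k * ([:0,1:] * f))"
      by (simp add: algebra_simps)
    have "S (ladd r (of_poly ([:1,1:]^Suc k * f))) =
       ldivx1 (ladd (lmulx r) (of_poly ([:0,1:] * ([:1,1:]^Suc k * f))))"
      using False pp by (simp add: S_def lmulx_ladd lmulx_of_poly)
    also have "\<dots> = ladd (S r) (of_poly ([:1,1:]^k * ([:0,1:] * f)))"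
      unfolding e ldivx1_ladd[OF lmulx_bnd[OF r] of_poly_bnd] ldivx1_of_poly S_def
      by (simp only: False if_False)
    finally show ?thesis using False by simp
  qed
qed

lemma parity_Suc: "parity r (Suc i) = parity (S r) i"
  by (simp only: parity_def funpow_Suc_right comp_apply)

lemma main:
  "\<forall>r f N. bnd r N \<longrightarrow> poly f 1 = 1 \<longrightarrow>
    (\<forall>i<k. parity r i = parity (ladd r (of_poly ([:1, 1:] ^ k * f))) i)
     \<and> parity r k \<noteq> parity (ladd r (of_poly ([:1, 1:] ^ k * f))) k"
proof (induction k)
  case 0
  show ?case
  proof (intro allI impI)
    fix r f N assume r: "bnd r N" and f: "poly f 1 = (1::bit)"
    have "parity (ladd r (of_poly ([:1, 1:] ^ 0 * f))) 0 = parity r 0 + 1"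
      using pp_ladd[OF r, of f] f by (simp add: parity_def)
    then show "(\<forall>i<0. parity r i = parity (ladd r (of_poly ([:1, 1:] ^ 0 * f))) i)
     \<and> parity r 0 \<noteq> parity (ladd r (of_poly ([:1, 1:] ^ 0 * f))) 0"
      by (cases "parity r 0") simp_all
  qed
next
  case (Suc k)
  show ?case
  proof (intro allI impI)
    fix r f N assume r: "bnd r N" and f: "poly f 1 = (1::bit)"
    define f' where "f' = (if polypart_at1 r = 0 then f else [:0,1:] * f)"
    have f': "poly f' 1 = 1" using f by (simp add: f'_def)
    let ?s = "ladd r (of_poly ([:1, 1:] ^ Suc k * f))"
    have Ss: "S ?s = ladd (S r) (of_poly ([:1,1:]^k * f'))"
      using S_shift[OF r] by (simp add: f'_def)
    note IH = Suc.IH[rule_format, OF S_bnd[OF r] f', folded Ss]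
    have p0: "parity r 0 = parity ?s 0"
      using pp_ladd[OF r] by (simp add: parity_def)
    have "\<forall>i<Suc k. parity r i = parity ?s i"
    proof (intro allI impI)
      fix i assume "i < Suc k"
      then show "parity r i = parity ?s i"
        using IH p0 by (cases i) (simp_all add: parity_Suc)
    qed
    then show "(\<forall>i<Suc k. parity r i = parity ?s i) \<and> parity r (Suc k) \<noteq> parity ?s (Suc k)"
      using IH by (simp add: parity_Suc)
  qed
qed

theorem lemma2p7:
  fixes r :: laur and k :: nat and f :: "bit poly"
  assumes "laurent r"
    and "poly f 1 = 1"
  shows "(\<forall>i<k. parity r i = parity (ladd r (of_poly ([:1, 1:] ^ k * f))) i)
     \<and> parity r k \<noteq> parity (ladd r (of_poly ([:1, 1:] ^ k * f))) k"
proof -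
  obtain N where N: "bnd r N" using laurent_bnd[OF assms(1)] by blast
  show ?thesis by (rule main[rule_format, OF N assms(2)])
qed

end
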